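(* Assume the setting and notation in the context, and suppose the selection threshold depends only on the test scores: $\hat\tau=\tau(T_i: i\in\mathcal U)$ for a deterministic measurable function $\tau:\mathbb R^m\to\mathbb R$ (so $\hat\tau$ is independent of the calibration data). Let $\hat{\mathcal S}_u=\{i\in\mathcal U:T_i\le\hat\tau\}$. For $j\in\mathcal U$ and $t\in\mathbb R$, let $\hat{\mathcal S}_u^{j\leftarrow t}$ be the selected test set obtained by the same rule after replacing $T_j$ by $t$ (including recomputing the threshold), and for $j\in\hat{\mathcal S}_u$ let $M^j_{\min}=\min_{t\in\mathbb R}\{|\hat{\mathcal S}_u^{j\leftarrow t}| : j\in\hat{\mathcal S}_u^{j\leftarrow t}\}$ and $\alpha_j=\alpha M^j_{\min}/m$. Define, for $j\in\hat{\mathcal S}_u$, $\mathrm{PI}^{\mathrm{AD}}_j=[\hat\mu(X_j)-q_j,\ \hat\mu(X_j)+q_j]$ where $q_j$ is the $\lceil(1-\alpha_j)(n+1)\rceil$-th smallest value of $\{R_i\}_{i\in\mathcal C}$ ($+\infty$ if this index exceeds $n$). Then the FCR of the intervals $\{\mathrm{PI}^{\mathrm{AD}}_j\}_{j\in\hat{\mathcal S}_u}$ satisfies $\mathrm{FCR}\le\alpha$.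
   Context: Setting: $\hat\mu:\mathbb R^d\to\mathbb R$ (prediction model) and $g:\mathbb R^d\to\mathbb R$ (selection score) are fixed deterministic measurable functions. Calibration indices form a set $\mathcal C$ with $|\mathcal C|=n$; test indices a disjoint set $\mathcal U$ with $|\mathcal U|=m$. The pairs $(X_i,Y_i)\in\mathbb R^d\times\mathbb R$, $i\in\mathcal C\cup\mathcal U$, are i.i.d. Scores $T_i=g(X_i)$, residuals $R_i=|Y_i-\hat\mu(X_i)|$, $\alpha\in(0,1)$. For a selected test set $\hat{\mathcal S}_u$ with intervals $\mathrm{PI}_j$, $\mathrm{FCR}=\mathbb E\Big[\frac{|\{j\in\hat{\mathcal S}_u: Y_j\notin\mathrm{PI}_j\}|}{\max\{|\hat{\mathcal S}_u|,1\}}\Big]$. *)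

theory Defs
  imports "HOL-Analysis.Analysis" "HOL-Probability.Probability" "HOL-Library.Multiset"
begin

definition sel :: "nat set \<Rightarrow> ((nat \<Rightarrow> real) \<Rightarrow> real) \<Rightarrow> (nat \<Rightarrow> real) \<Rightarrow> nat set" where
  "sel U \<tau> T = {i \<in> U. T i \<le> \<tau> (restrict T U)}"

definition Mmin :: "nat set \<Rightarrow> ((nat \<Rightarrow> real) \<Rightarrow> real) \<Rightarrow> (nat \<Rightarrow> real) \<Rightarrow> nat \<Rightarrow> nat" where
  "Mmin U \<tau> T j = Min {card (sel U \<tau> (T(j := t))) | t. j \<in> sel U \<tau> (T(j := t))}"

definition alpha_adj :: "real \<Rightarrow> nat set \<Rightarrow> ((nat \<Rightarrow> real) \<Rightarrow> real) \<Rightarrow> (nat \<Rightarrow> real) \<Rightarrow> nat \<Rightarrow> real" where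
  "alpha_adj \<alpha> U \<tau> T j = \<alpha> * real (Mmin U \<tau> T j) / real (card U)"

definition conf_q :: "real \<Rightarrow> nat set \<Rightarrow> (nat \<Rightarrow> real) \<Rightarrow> ereal" where
  "conf_q a C R = (let k = \<lceil>(1 - a) * (real (card C) + 1)\<rceil> in
     if k > int (card C) then \<infinity>
     else ereal (sorted_list_of_multiset (image_mset R (mset_set C)) ! (nat k - 1)))"

definition score :: "('x \<Rightarrow> real) \<Rightarrow> (nat \<Rightarrow> 'x \<times> real) \<Rightarrow> nat \<Rightarrow> real" where
  "score g \<omega> i = g (fst (\<omega> i))"

definition resid :: "('x \<Rightarrow> real) \<Rightarrow> (nat \<Rightarrow> 'x \<times> real) \<Rightarrow> nat \<Rightarrow> real" where
  "resid \<mu> \<omega> i = \<bar>snd (\<omega> i) - \<mu> (fst (\<omega> i))\<bar>"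

definition PI_AD :: "('x \<Rightarrow> real) \<Rightarrow> ('x \<Rightarrow> real) \<Rightarrow> real \<Rightarrow> nat set \<Rightarrow> nat set
    \<Rightarrow> ((nat \<Rightarrow> real) \<Rightarrow> real) \<Rightarrow> (nat \<Rightarrow> 'x \<times> real) \<Rightarrow> nat \<Rightarrow> real set" where
  "PI_AD \<mu> g \<alpha> C U \<tau> \<omega> j =
     (let q = conf_q (alpha_adj \<alpha> U \<tau> (score g \<omega>) j) C (resid \<mu> \<omega>)
      in {y. ereal (\<mu> (fst (\<omega> j))) - q \<le> ereal y \<and> ereal y \<le> ereal (\<mu> (fst (\<omega> j))) + q})"

definition FCR :: "'w measure \<Rightarrow> ('w \<Rightarrow> nat set) \<Rightarrow> ('w \<Rightarrow> nat \<Rightarrow> real set) \<Rightarrow> ('w \<Rightarrow> nat \<Rightarrow> real) \<Rightarrow> real" where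
  "FCR M S PI Y = (\<integral>\<omega>. real (card {j \<in> S \<omega>. Y \<omega> j \<notin> PI \<omega> j}) / real (max (card (S \<omega>)) 1) \<partial>M)"

end

theory Submission imports Defs "HOL-Combinatorics.Permutations" begin

lemma card_B:
  fixes R :: "nat \<Rightarrow> real"
  assumes "finite W"
  shows "card {i\<in>W. k \<le> card {l\<in>W. R l < R i}} + k \<le> card W \<or> {i\<in>W. k \<le> card {l\<in>W. R l < R i}} = {}"
proof (cases "{i\<in>W. k \<le> card {l\<in>W. R l < R i}} = {}")
  case False
  let ?B = "{i\<in>W. k \<le> card {l\<in>W. R l < R i}}"
  have fB: "finite ?B" using assms by auto
  have "Min (R ` ?B) \<in> R ` ?B" using fB False by (intro Min_in) auto
  then obtain b where b1: "b \<in> ?B" and bm: "R b = Min (R ` ?B)" by auto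
  have b2: "R b \<le> R x" if "x \<in> ?B" for x
    unfolding bm using that fB by (intro Min_le) auto
  note b = b1 b2
  have "{l\<in>W. R l < R b} \<subseteq> W - ?B" using b(2) by force
  hence "card {l\<in>W. R l < R b} \<le> card (W - ?B)" using assms by (intro card_mono) auto
  also have "\<dots> = card W - card ?B" using assms by (intro card_Diff_subset) auto
  finally have "k \<le> card W - card ?B" using b(1) by auto
  moreover have "card ?B \<le> card W" using assms by (intro card_mono) auto
  ultimately show ?thesis by linarith
qed auto

lemma sorted_count:
  fixes xs :: "real list"
  assumes "sorted xs" "k \<le> length xs" "0 < k" "xs ! (k - 1) < r"
  shows "k \<le> length (filter (\<lambda>x. x < r) xs)"
proof -
  have "\<forall>x\<in>set (take k xs). x < r"
  proof
    fix x assume "x \<in> set (take k xs)"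
    then obtain p where p: "p < k" "x = xs ! p" using assms(2)
      by (auto simp: in_set_conv_nth)
    have "xs ! p \<le> xs ! (k-1)" using assms p by (intro sorted_nth_mono) auto
    thus "x < r" using p assms by auto
  qed
  hence "filter (\<lambda>x. x < r) (take k xs) = take k xs" by simp
  hence "length (filter (\<lambda>x. x < r) (take k xs)) = k" using assms by simp
  moreover have "length (filter (\<lambda>x. x < r) (take k xs)) \<le> length (filter (\<lambda>x. x < r) xs)"
    by (metis append_take_drop_id filter_append le_add1 length_append)
  ultimately show ?thesis by simp
qed

lemma size_filter_image_mset:
  "finite A \<Longrightarrow> size (filter_mset P (image_mset R (mset_set A))) = card {l\<in>A. P (R l)}"
  by (simp add: filter_mset_image_mset)

lemma rank_lemma:
  fixes R :: "nat \<Rightarrow> real"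
  assumes W: "finite W" and a: "0 \<le> a"
  shows "real (card {i\<in>W. conf_q a (W-{i}) R < ereal (R i)}) \<le> a * real (card W)"
proof (cases "W = {}")
  case True thus ?thesis by simp
next
  case False
  let ?N = "card W"
  have N1: "?N \<ge> 1" using W False by (simp add: Suc_leI card_gt_0_iff)
  define k where "k = \<lceil>(1 - a) * real ?N\<rceil>"
  have cW: "i \<in> W \<Longrightarrow> card (W - {i}) = ?N - 1" for i using W by simp
  have kdef: "i \<in> W \<Longrightarrow> \<lceil>(1 - a) * (real (card (W - {i})) + 1)\<rceil> = k" for i
    using cW N1 unfolding k_def by (simp add: of_nat_diff)
  let ?S = "{i\<in>W. conf_q a (W-{i}) R < ereal (R i)}"
  have fS: "finite ?S" using W by simp
  consider "k > int (?N - 1)" | "k \<le> 0" | "0 < k" "k \<le> int (?N - 1)" by linarith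
  then show ?thesis
  proof cases
    case 1
    hence "?S = {}" using kdef cW by (auto simp: conf_q_def Let_def)
    hence "card ?S = 0" by (metis card.empty)
    thus ?thesis using a by simp
  next
    case 2
    hence "(1 - a) * real ?N \<le> 0" unfolding k_def by linarith
    hence "real ?N \<le> a * real ?N" by (simp add: algebra_simps)
    moreover have "card ?S \<le> ?N" using W by (intro card_mono) auto
    ultimately show ?thesis by linarith
  next
    case 3
    define kk where "kk = nat k"
    have kk: "0 < kk" "kk \<le> ?N - 1" "int kk = k" using 3 unfolding kk_def by auto
    let ?B = "{i\<in>W. kk \<le> card {l\<in>W. R l < R i}}"
    have SB: "?S \<subseteq> ?B"
    proof
      fix i assume i: "i \<in> ?S"
      hence iW: "i \<in> W" by simp
      let ?M = "image_mset R (mset_set (W - {i}))"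
      let ?xs = "sorted_list_of_multiset ?M"
      have len: "length ?xs = ?N - 1" using cW[OF iW] W
        by (metis mset_sorted_list_of_multiset size_image_mset size_mset size_mset_set)
      have "conf_q a (W-{i}) R = ereal (?xs ! (kk - 1))"
        using kdef[OF iW] cW[OF iW] 3 kk unfolding conf_q_def Let_def kk_def by simp
      hence lt: "?xs ! (kk - 1) < R i" using i by simp
      have "kk \<le> length (filter (\<lambda>x. x < R i) ?xs)"
        using sorted_count[OF _ _ kk(1) lt] len kk by simp
      also have "length (filter (\<lambda>x. x < R i) ?xs) = size (filter_mset (\<lambda>x. x < R i) ?M)"
        by (metis mset_filter mset_sorted_list_of_multiset size_mset)
      also have "\<dots> = card {l\<in>W-{i}. R l < R i}" using W by (simp add: size_filter_image_mset)
      also have "\<dots> \<le> card {l\<in>W. R l < R i}" using W by (intro card_mono) auto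
      finally show "i \<in> ?B" using iW by simp
    qed
    have "card ?S \<le> card ?B" using W SB by (intro card_mono) auto
    have cSN: "card ?S + kk \<le> ?N"
    proof (cases "?B = {}")
      case True
      then have "card ?B = 0" by (metis card.empty)
      thus ?thesis using \<open>card ?S \<le> card ?B\<close> kk by linarith
    next
      case False
      have "card ?B + kk \<le> ?N \<or> ?B = {}" by (rule card_B[OF W])
      with False have "card ?B + kk \<le> ?N" by blast
      thus ?thesis using \<open>card ?S \<le> card ?B\<close> by linarith
    qed
    moreover note cSN
    moreover have "(1 - a) * real ?N \<le> real kk" using kk unfolding k_def by linarith
    ultimately show ?thesis by (simp add: algebra_simps)
  qed
qed


lemma sel_cong: "(\<And>l. l \<in> U \<Longrightarrow> T l = T' l) \<Longrightarrow> sel U \<tau> T = sel U \<tau> T'"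
proof -
  assume h: "\<And>l. l \<in> U \<Longrightarrow> T l = T' l"
  hence "restrict T U = restrict T' U" by (auto simp: restrict_def)
  thus ?thesis using h unfolding sel_def by auto
qed

lemma sel_sub: "sel U \<tau> T \<subseteq> U" by (auto simp: sel_def)

definition Aj :: "nat set \<Rightarrow> ((nat \<Rightarrow> real) \<Rightarrow> real) \<Rightarrow> (nat \<Rightarrow> real) \<Rightarrow> nat \<Rightarrow> bool" where
  "Aj U \<tau> T j = (\<exists>t. j \<in> sel U \<tau> (T(j:=t)))"

lemma Mmin_props:
  assumes U: "finite U" and A: "Aj U \<tau> T j"
  shows "1 \<le> Mmin U \<tau> T j" "Mmin U \<tau> T j \<le> card U"
    "j \<in> sel U \<tau> T \<Longrightarrow> Mmin U \<tau> T j \<le> card (sel U \<tau> T)"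
proof -
  let ?X = "{card (sel U \<tau> (T(j := t))) | t. j \<in> sel U \<tau> (T(j := t))}"
  have fin: "finite ?X"
  proof (rule finite_subset)
    show "?X \<subseteq> {..card U}" using U sel_sub by (fastforce intro!: card_mono)
  qed simp
  have ne: "?X \<noteq> {}" using A unfolding Aj_def by auto
  have "Mmin U \<tau> T j \<in> ?X" unfolding Mmin_def using Min_in[OF fin ne] .
  then obtain t where t: "Mmin U \<tau> T j = card (sel U \<tau> (T(j := t)))" "j \<in> sel U \<tau> (T(j := t))"
    by auto
  show "1 \<le> Mmin U \<tau> T j" using t U
    by (metis One_nat_def Suc_leI card_gt_0_iff empty_iff finite_subset sel_sub)
  show "Mmin U \<tau> T j \<le> card U" using t U by (simp add: card_mono sel_sub)
  assume j: "j \<in> sel U \<tau> T"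
  have "card (sel U \<tau> (T(j := T j))) \<in> ?X" using j by (metis (mono_tags, lifting) fun_upd_triv mem_Collect_eq)
  hence "Mmin U \<tau> T j \<le> card (sel U \<tau> (T(j := T j)))" unfolding Mmin_def using fin by simp
  thus "Mmin U \<tau> T j \<le> card (sel U \<tau> T)" by simp
qed

lemma miscov_iff:
  "(snd (\<omega> j) \<notin> PI_AD \<mu> g \<alpha> C U \<tau> \<omega> j) \<longleftrightarrow>
     conf_q (alpha_adj \<alpha> U \<tau> (score g \<omega>) j) C (resid \<mu> \<omega>) < ereal (resid \<mu> \<omega> j)"
proof -
  obtain q where q: "q = conf_q (alpha_adj \<alpha> U \<tau> (score g \<omega>) j) C (resid \<mu> \<omega>)" by simp
  show ?thesis unfolding PI_AD_def Let_def q[symmetric] resid_def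
    by (cases q) auto
qed

lemma conf_q_cong: assumes "card C = card C'" "image_mset R (mset_set C) = image_mset R' (mset_set C')"
  shows "conf_q a C R = conf_q a C' R'"
  unfolding conf_q_def by (simp only: assms)


definition Gj where "Gj \<mu> g \<alpha> C U \<tau> \<omega> j = (if Aj U \<tau> (score g \<omega>) j \<and> snd (\<omega> j) \<notin> PI_AD \<mu> g \<alpha> C U \<tau> \<omega> j
   then 1 / real (Mmin U \<tau> (score g \<omega>) j) else 0)"

lemma transpose_image: "j \<notin> C \<Longrightarrow> i \<in> insert j C \<Longrightarrow> Transposition.transpose i j ` C = insert j C - {i}"
  by (auto simp: Transposition.transpose_def image_iff)

context
  fixes \<mu> g :: "'x \<Rightarrow> real" and \<alpha> :: real and C U :: "nat set" and \<tau> :: "(nat \<Rightarrow> real) \<Rightarrow> real" and \<omega> :: "nat \<Rightarrow> 'x \<times> real"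
    and i j :: nat
  assumes CU: "C \<inter> U = {}" and j: "j \<in> U" and i: "i \<in> insert j C"
begin

lemma swap_sel: "sel U \<tau> ((score g (\<omega> \<circ> Transposition.transpose i j))(j:=t)) = sel U \<tau> ((score g \<omega>)(j:=t))"
proof (rule sel_cong)
  fix l assume l: "l \<in> U"
  show "((score g (\<omega> \<circ> Transposition.transpose i j))(j:=t)) l = ((score g \<omega>)(j:=t)) l"
  proof (cases "l = j")
    case False
    hence "l \<noteq> i" using l i CU j by auto
    thus ?thesis using False by (simp add: score_def)
  qed simp
qed

lemma swap_Aj: "Aj U \<tau> (score g (\<omega> \<circ> Transposition.transpose i j)) j = Aj U \<tau> (score g \<omega>) j"
  unfolding Aj_def swap_sel ..

lemma swap_Mmin: "Mmin U \<tau> (score g (\<omega> \<circ> Transposition.transpose i j)) j = Mmin U \<tau> (score g \<omega>) j"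
  unfolding Mmin_def swap_sel ..

lemma swap_resid: "resid \<mu> (\<omega> \<circ> Transposition.transpose i j) j = resid \<mu> \<omega> i"
  by (simp add: resid_def)

lemma swap_conf_q:
  assumes C: "finite C"
  shows "conf_q a C (resid \<mu> (\<omega> \<circ> Transposition.transpose i j)) = conf_q a (insert j C - {i}) (resid \<mu> \<omega>)"
proof (rule conf_q_cong)
  have jC: "j \<notin> C" using CU j by auto
  show "card C = card (insert j C - {i})" using C jC i by auto
  have "resid \<mu> (\<omega> \<circ> Transposition.transpose i j) = resid \<mu> \<omega> \<circ> Transposition.transpose i j"
    by (auto simp: resid_def)
  hence "image_mset (resid \<mu> (\<omega> \<circ> Transposition.transpose i j)) (mset_set C)
     = image_mset (resid \<mu> \<omega>) (image_mset (Transposition.transpose i j) (mset_set C))"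
    by (simp add: multiset.map_comp)
  also have "image_mset (Transposition.transpose i j) (mset_set C) = mset_set (Transposition.transpose i j ` C)"
    by (rule image_mset_mset_set) (rule inj_on_transpose)
  also have "Transposition.transpose i j ` C = insert j C - {i}" using transpose_image[OF jC i] .
  finally show "image_mset (resid \<mu> (\<omega> \<circ> Transposition.transpose i j)) (mset_set C) =
      image_mset (resid \<mu> \<omega>) (mset_set (insert j C - {i}))" .
qed

end


lemma Gj_swap_sum:
  fixes \<tau> :: "(nat \<Rightarrow> real) \<Rightarrow> real"
  assumes C: "finite C" and U: "finite U" and CU: "C \<inter> U = {}" and j: "j \<in> U" and \<alpha>: "0 \<le> \<alpha>"
  shows "(\<Sum>i\<in>insert j C. Gj \<mu> g \<alpha> C U \<tau> (\<omega> \<circ> Transposition.transpose i j) j)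
           \<le> real (card (insert j C)) * \<alpha> / real (card U)"
proof (cases "Aj U \<tau> (score g \<omega>) j")
  case False
  have "Gj \<mu> g \<alpha> C U \<tau> (\<omega> \<circ> Transposition.transpose i j) j = 0" if "i \<in> insert j C" for i
  proof -
    have "\<not> Aj U \<tau> (score g (\<omega> \<circ> Transposition.transpose i j)) j"
      using False swap_Aj[OF CU j that] by metis
    thus ?thesis unfolding Gj_def by simp
  qed
  hence "(\<Sum>i\<in>insert j C. Gj \<mu> g \<alpha> C U \<tau> (\<omega> \<circ> Transposition.transpose i j) j) = 0" by simp
  thus ?thesis using \<alpha> by simp
next
  case True
  let ?W = "insert j C"
  define M where "M = Mmin U \<tau> (score g \<omega>) j"
  define a where "a = alpha_adj \<alpha> U \<tau> (score g \<omega>) j"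
  have M1: "1 \<le> M" and MU: "M \<le> card U" using Mmin_props[OF U True] unfolding M_def by auto
  have a: "a = \<alpha> * real M / real (card U)" unfolding a_def alpha_adj_def M_def ..
  have a0: "0 \<le> a" unfolding a using \<alpha> by simp
  let ?P = "\<lambda>i. conf_q a (?W - {i}) (resid \<mu> \<omega>) < ereal (resid \<mu> \<omega> i)"
  have tm: "Gj \<mu> g \<alpha> C U \<tau> (\<omega> \<circ> Transposition.transpose i j) j = (if ?P i then 1 / real M else 0)"
    if i: "i \<in> ?W" for i
  proof -
    have "alpha_adj \<alpha> U \<tau> (score g (\<omega> \<circ> Transposition.transpose i j)) j = a"
      unfolding a_def alpha_adj_def swap_Mmin[OF CU j i] ..
    thus ?thesis unfolding Gj_def miscov_iff swap_Aj[OF CU j i] swap_Mmin[OF CU j i]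
        swap_resid[OF CU j i] swap_conf_q[OF CU j i C] M_def using True by simp
  qed
  have "(\<Sum>i\<in>?W. Gj \<mu> g \<alpha> C U \<tau> (\<omega> \<circ> Transposition.transpose i j) j)
        = (\<Sum>i\<in>?W. if ?P i then 1 / real M else 0)" using tm by (intro sum.cong) auto
  also have "\<dots> = (\<Sum>i\<in>{i\<in>?W. ?P i}. 1 / real M)" by (rule sum.inter_filter[symmetric]) (use C in simp)
  also have "\<dots> = real (card {i\<in>?W. ?P i}) / real M" by simp
  also have "\<dots> \<le> a * real (card ?W) / real M"
    using rank_lemma[of ?W a "resid \<mu> \<omega>"] C a0 M1 by (intro divide_right_mono) auto
  also have "\<dots> = real (card ?W) * \<alpha> / real (card U)" unfolding a using M1 by simp
  finally show ?thesis .
qed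


lemma Gj_perm_sum:
  fixes \<tau> :: "(nat \<Rightarrow> real) \<Rightarrow> real"
  assumes C: "finite C" and U: "finite U" and CU: "C \<inter> U = {}" and j: "j \<in> U" and \<alpha>: "0 \<le> \<alpha>"
  shows "(\<Sum>\<pi>\<in>{\<pi>. \<pi> permutes (C \<union> U)}. Gj \<mu> g \<alpha> C U \<tau> (\<omega> \<circ> \<pi>) j)
           \<le> real (card {\<pi>. \<pi> permutes (C \<union> U)}) * \<alpha> / real (card U)"
proof -
  let ?P = "{\<pi>. \<pi> permutes (C \<union> U)}"
  let ?W = "insert j C"
  let ?G = "\<lambda>\<omega>'. Gj \<mu> g \<alpha> C U \<tau> \<omega>' j"
  have fP: "finite ?P" using C U by (intro finite_permutations) simp
  have eq: "(\<Sum>\<pi>\<in>?P. ?G (\<omega> \<circ> \<pi>)) = (\<Sum>\<pi>\<in>?P. ?G ((\<omega> \<circ> \<pi>) \<circ> Transposition.transpose i j))"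
    if i: "i \<in> ?W" for i
  proof -
    have "Transposition.transpose i j permutes (C \<union> U)" using i j by (intro permutes_swap_id) auto
    from sum_permutations_compose_right[OF this, of "\<lambda>\<pi>. ?G (\<omega> \<circ> \<pi>)"]
    show ?thesis by (simp add: o_assoc)
  qed
  have "real (card ?W) * (\<Sum>\<pi>\<in>?P. ?G (\<omega> \<circ> \<pi>)) = (\<Sum>i\<in>?W. \<Sum>\<pi>\<in>?P. ?G (\<omega> \<circ> \<pi>))" by simp
  also have "\<dots> = (\<Sum>i\<in>?W. \<Sum>\<pi>\<in>?P. ?G ((\<omega> \<circ> \<pi>) \<circ> Transposition.transpose i j))"
    by (rule sum.cong[OF refl], rule eq, assumption)
  also have "\<dots> = (\<Sum>\<pi>\<in>?P. \<Sum>i\<in>?W. ?G ((\<omega> \<circ> \<pi>) \<circ> Transposition.transpose i j))"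
    by (rule sum.swap)
  also have "\<dots> \<le> (\<Sum>\<pi>\<in>?P. real (card ?W) * \<alpha> / real (card U))"
    by (intro sum_mono Gj_swap_sum[OF C U CU j \<alpha>])
  also have "\<dots> = real (card ?W) * (real (card ?P) * \<alpha> / real (card U))"
    by (simp add: sum_constant)
  finally have le: "real (card ?W) * (\<Sum>\<pi>\<in>?P. ?G (\<omega> \<circ> \<pi>)) \<le> real (card ?W) * (real (card ?P) * \<alpha> / real (card U))" .
  have "0 < real (card ?W)" using C by (simp add: card_gt_0_iff)
  with le have "(\<Sum>\<pi>\<in>?P. ?G (\<omega> \<circ> \<pi>)) \<le> real (card ?P) * \<alpha> / real (card U)"
    by (rule mult_le_cancel_left_pos[THEN iffD1, rotated])
  thus ?thesis by simp
qed


lemma Gj_nonneg: "0 \<le> Gj \<mu> g \<alpha> C U \<tau> \<omega> j"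
  unfolding Gj_def by simp

lemma F_le:
  fixes \<tau> :: "(nat \<Rightarrow> real) \<Rightarrow> real"
  assumes U: "finite U"
  shows "real (card {j \<in> sel U \<tau> (score g \<omega>). snd (\<omega> j) \<notin> PI_AD \<mu> g \<alpha> C U \<tau> \<omega> j})
           / real (max (card (sel U \<tau> (score g \<omega>))) 1) \<le> (\<Sum>j\<in>U. Gj \<mu> g \<alpha> C U \<tau> \<omega> j)"
proof -
  let ?S = "sel U \<tau> (score g \<omega>)"
  let ?Mis = "{j \<in> ?S. snd (\<omega> j) \<notin> PI_AD \<mu> g \<alpha> C U \<tau> \<omega> j}"
  have fS: "finite ?S" by (rule finite_subset[OF sel_sub U])
  have MisU: "?Mis \<subseteq> U" using sel_sub by blast
  show ?thesis
  proof (cases "?S = {}")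
    case True
    hence "?Mis = {}" by blast
    hence "card ?Mis = 0" by (simp only: card.empty)
    moreover have "0 \<le> (\<Sum>j\<in>U. Gj \<mu> g \<alpha> C U \<tau> \<omega> j)" by (intro sum_nonneg Gj_nonneg)
    ultimately show ?thesis by simp
  next
    case False
    hence cS: "card ?S \<ge> 1" using fS by (simp add: Suc_leI card_gt_0_iff)
    have "real (card ?Mis) / real (max (card ?S) 1) = (\<Sum>j\<in>?Mis. 1 / real (card ?S))"
      using cS by (simp add: max_def)
    also have "\<dots> \<le> (\<Sum>j\<in>?Mis. Gj \<mu> g \<alpha> C U \<tau> \<omega> j)"
    proof (rule sum_mono)
      fix j assume jm: "j \<in> ?Mis"
      hence jS: "j \<in> ?S" and miss: "snd (\<omega> j) \<notin> PI_AD \<mu> g \<alpha> C U \<tau> \<omega> j" by blast+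
      have "j \<in> sel U \<tau> ((score g \<omega>)(j := score g \<omega> j))" using jS by (simp only: fun_upd_triv)
      hence A: "Aj U \<tau> (score g \<omega>) j" unfolding Aj_def by blast
      have M: "1 \<le> Mmin U \<tau> (score g \<omega>) j" "Mmin U \<tau> (score g \<omega>) j \<le> card ?S"
        by (rule Mmin_props(1)[OF U A], rule Mmin_props(3)[OF U A jS])
      have "Gj \<mu> g \<alpha> C U \<tau> \<omega> j = 1 / real (Mmin U \<tau> (score g \<omega>) j)"
        unfolding Gj_def by (rule if_P) (use A miss in blast)
      moreover have "1 / real (card ?S) \<le> 1 / real (Mmin U \<tau> (score g \<omega>) j)"
      proof (rule divide_left_mono)
        show "real (Mmin U \<tau> (score g \<omega>) j) \<le> real (card ?S)" using M(2) by (simp only: of_nat_le_iff)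
        show "0 \<le> (1::real)" by simp
        have "0 < real (Mmin U \<tau> (score g \<omega>) j)" using M(1) by linarith
        moreover have "0 < real (card ?S)" using M by linarith
        ultimately show "0 < real (card ?S) * real (Mmin U \<tau> (score g \<omega>) j)" by simp
      qed
      ultimately show "1 / real (card ?S) \<le> Gj \<mu> g \<alpha> C U \<tau> \<omega> j" by simp
    qed
    also have "\<dots> \<le> (\<Sum>j\<in>U. Gj \<mu> g \<alpha> C U \<tau> \<omega> j)"
      using U MisU by (intro sum_mono2) (auto simp: Gj_nonneg)
    finally show ?thesis .
  qed
qed

lemma comb_bound:
  fixes \<tau> :: "(nat \<Rightarrow> real) \<Rightarrow> real"
  assumes C: "finite C" and U: "finite U" and CU: "C \<inter> U = {}" and \<alpha>: "0 \<le> \<alpha>"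
  shows "(\<Sum>\<pi>\<in>{\<pi>. \<pi> permutes (C \<union> U)}.
     real (card {j \<in> sel U \<tau> (score g (\<omega> \<circ> \<pi>)). snd ((\<omega> \<circ> \<pi>) j) \<notin> PI_AD \<mu> g \<alpha> C U \<tau> (\<omega> \<circ> \<pi>) j})
           / real (max (card (sel U \<tau> (score g (\<omega> \<circ> \<pi>)))) 1))
     \<le> real (card {\<pi>. \<pi> permutes (C \<union> U)}) * \<alpha>"
proof -
  let ?P = "{\<pi>. \<pi> permutes (C \<union> U)}"
  have "(\<Sum>\<pi>\<in>?P.
     real (card {j \<in> sel U \<tau> (score g (\<omega> \<circ> \<pi>)). snd ((\<omega> \<circ> \<pi>) j) \<notin> PI_AD \<mu> g \<alpha> C U \<tau> (\<omega> \<circ> \<pi>) j})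
           / real (max (card (sel U \<tau> (score g (\<omega> \<circ> \<pi>)))) 1))
     \<le> (\<Sum>\<pi>\<in>?P. \<Sum>j\<in>U. Gj \<mu> g \<alpha> C U \<tau> (\<omega> \<circ> \<pi>) j)"
    by (intro sum_mono F_le[OF U])
  also have "\<dots> = (\<Sum>j\<in>U. \<Sum>\<pi>\<in>?P. Gj \<mu> g \<alpha> C U \<tau> (\<omega> \<circ> \<pi>) j)" by (rule sum.swap)
  also have "\<dots> \<le> (\<Sum>j\<in>U. real (card ?P) * \<alpha> / real (card U))"
    by (intro sum_mono Gj_perm_sum[OF C U CU _ \<alpha>])
  also have "\<dots> \<le> real (card ?P) * \<alpha>"
    using \<alpha> by (cases "card U = 0") auto
  finally show ?thesis .
qed


lemma perm_invariant:
  fixes D :: "'a measure" and f :: "(nat \<Rightarrow> 'a) \<Rightarrow> real"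
  assumes D: "prob_space D" and \<pi>: "\<pi> permutes V" and f: "integrable (Pi\<^sub>M V (\<lambda>_. D)) f"
  shows "integrable (Pi\<^sub>M V (\<lambda>_. D)) (\<lambda>\<omega>. f (\<omega> \<circ> \<pi>))"
    "integral\<^sup>L (Pi\<^sub>M V (\<lambda>_. D)) (\<lambda>\<omega>. f (\<omega> \<circ> \<pi>)) = integral\<^sup>L (Pi\<^sub>M V (\<lambda>_. D)) f"
proof -
  let ?P = "Pi\<^sub>M V (\<lambda>_. D)"
  let ?\<phi> = "\<lambda>\<omega>. \<lambda>n\<in>V. \<omega> (\<pi> n)"
  have inj: "inj_on \<pi> V" using \<pi> permutes_inj_on by blast
  have into: "\<pi> \<in> V \<rightarrow> V" by (simp add: Pi_def permutes_in_image[OF \<pi>])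
  have dist: "distr ?P ?P ?\<phi> = ?P"
    using distr_PiM_reindex[of V "\<lambda>_. D" \<pi> V, OF _ inj into] D by simp
  have meas: "?\<phi> \<in> measurable ?P ?P"
    using into by (intro measurable_restrict measurable_component_singleton) auto
  have fm: "f \<in> borel_measurable ?P" using f by simp
  have eqs: "?\<phi> \<omega> = \<omega> \<circ> \<pi>" if "\<omega> \<in> space ?P" for \<omega>
  proof
    fix n show "?\<phi> \<omega> n = (\<omega> \<circ> \<pi>) n"
    proof (cases "n \<in> V")
      case False
      hence "\<pi> n = n" using \<pi> by (simp add: permutes_not_in)
      moreover have "\<omega> n = undefined" using that False by (auto simp: space_PiM PiE_def extensional_def)
      ultimately show ?thesis using False by simp
    qed simp
  qed
  have "integrable ?P (\<lambda>\<omega>. f (?\<phi> \<omega>))"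
    using f dist integrable_distr_eq[OF meas fm] by simp
  moreover have "integrable ?P (\<lambda>\<omega>. f (?\<phi> \<omega>)) \<longleftrightarrow> integrable ?P (\<lambda>\<omega>. f (\<omega> \<circ> \<pi>))"
    by (rule Bochner_Integration.integrable_cong[where f="\<lambda>\<omega>. f (?\<phi> \<omega>)" and g="\<lambda>\<omega>. f (\<omega> \<circ> \<pi>)"]) (simp_all add: eqs)
  ultimately show "integrable ?P (\<lambda>\<omega>. f (\<omega> \<circ> \<pi>))" by blast
  have "integral\<^sup>L ?P f = integral\<^sup>L (distr ?P ?P ?\<phi>) f" using dist by simp
  also have "\<dots> = integral\<^sup>L ?P (\<lambda>\<omega>. f (?\<phi> \<omega>))" by (rule integral_distr[OF meas fm])
  also have "\<dots> = integral\<^sup>L ?P (\<lambda>\<omega>. f (\<omega> \<circ> \<pi>))" by (rule Bochner_Integration.integral_cong[where f="\<lambda>\<omega>. f (?\<phi> \<omega>)" and g="\<lambda>\<omega>. f (\<omega> \<circ> \<pi>)"]) (simp_all add: eqs)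
  finally show "integral\<^sup>L ?P (\<lambda>\<omega>. f (\<omega> \<circ> \<pi>)) = integral\<^sup>L ?P f" by simp
qed

theorem proposition1:
  fixes D :: "((real ^ 'd) \<times> real) measure"
    and \<mu> g :: "real ^ 'd \<Rightarrow> real"
    and \<tau> :: "(nat \<Rightarrow> real) \<Rightarrow> real"
    and C U :: "nat set" and \<alpha> :: real
  assumes "prob_space D" and "sets D = sets borel"
    and "\<mu> \<in> borel_measurable borel" and "g \<in> borel_measurable borel"
    and "\<tau> \<in> borel_measurable (Pi\<^sub>M U (\<lambda>_. borel))"
    and "finite C" and "finite U" and "C \<inter> U = {}"
    and "0 < \<alpha>" and "\<alpha> < 1"
  shows "FCR (Pi\<^sub>M (C \<union> U) (\<lambda>_. D))
           (\<lambda>\<omega>. sel U \<tau> (score g \<omega>))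
           (\<lambda>\<omega> j. PI_AD \<mu> g \<alpha> C U \<tau> \<omega> j)
           (\<lambda>\<omega> j. snd (\<omega> j)) \<le> \<alpha>"
proof -
  let ?P = "Pi\<^sub>M (C \<union> U) (\<lambda>_. D)"
  define f where "f = (\<lambda>\<omega>. real (card {j \<in> sel U \<tau> (score g \<omega>). snd (\<omega> j) \<notin> PI_AD \<mu> g \<alpha> C U \<tau> \<omega> j})
           / real (max (card (sel U \<tau> (score g \<omega>))) 1))"
  have FCR: "FCR ?P (\<lambda>\<omega>. sel U \<tau> (score g \<omega>)) (\<lambda>\<omega> j. PI_AD \<mu> g \<alpha> C U \<tau> \<omega> j) (\<lambda>\<omega> j. snd (\<omega> j))
     = integral\<^sup>L ?P f" unfolding FCR_def f_def ..
  show ?thesis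
  proof (cases "integrable ?P f")
    case False
    thus ?thesis using FCR assms(9) by (simp add: not_integrable_integral_eq)
  next
    case True
    interpret P: prob_space ?P using assms(1) by (intro prob_space_PiM) auto
    let ?Perm = "{\<pi>. \<pi> permutes (C \<union> U)}"
    have fin: "finite ?Perm" using assms(6,7) by (intro finite_permutations) simp
    have cpos: "0 < card ?Perm"
      using card_permutations[OF refl, of "C \<union> U"] assms(6,7) by simp
    have int: "integrable ?P (\<lambda>\<omega>. f (\<omega> \<circ> \<pi>))" if "\<pi> \<in> ?Perm" for \<pi>
      using perm_invariant(1)[OF assms(1) _ True] that by simp
    have "real (card ?Perm) * integral\<^sup>L ?P f = (\<Sum>\<pi>\<in>?Perm. integral\<^sup>L ?P (\<lambda>\<omega>. f (\<omega> \<circ> \<pi>)))"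
      using perm_invariant(2)[OF assms(1) _ True] by simp
    also have "\<dots> = integral\<^sup>L ?P (\<lambda>\<omega>. \<Sum>\<pi>\<in>?Perm. f (\<omega> \<circ> \<pi>))"
      using Bochner_Integration.integral_sum[where I="?Perm" and M="?P" and f="\<lambda>\<pi> \<omega>. f (\<omega> \<circ> \<pi>)"] int by simp
    also have "\<dots> \<le> integral\<^sup>L ?P (\<lambda>\<omega>. real (card ?Perm) * \<alpha>)"
    proof (rule integral_mono)
      show "integrable ?P (\<lambda>\<omega>. \<Sum>\<pi>\<in>?Perm. f (\<omega> \<circ> \<pi>))" using int by (intro Bochner_Integration.integrable_sum) auto
      show "integrable ?P (\<lambda>\<omega>. real (card ?Perm) * \<alpha>)" by simp
      fix \<omega> show "(\<Sum>\<pi>\<in>?Perm. f (\<omega> \<circ> \<pi>)) \<le> real (card ?Perm) * \<alpha>"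
        unfolding f_def using comb_bound[OF assms(6,7,8), of \<alpha> \<tau> g \<omega> \<mu>] assms(9) by simp
    qed
    also have "\<dots> = real (card ?Perm) * \<alpha>" by (simp add: P.prob_space)
    finally have "real (card ?Perm) * integral\<^sup>L ?P f \<le> real (card ?Perm) * \<alpha>" .
    hence "integral\<^sup>L ?P f \<le> \<alpha>" using cpos by simp
    thus ?thesis using FCR by simp
  qed
qed

end
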